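(* For $n\ge1$ and complex parameters, the superalgebras $L(\beta_{\lfloor\frac{n+5}{2}\rfloor},\dots,\beta_{n+1})$ and $L(\beta'_{\lfloor\frac{n+5}{2}\rfloor},\dots,\beta'_{n+1})$ are isomorphic if and only if there exist $a_1,b_{n+2}\in\mathbb{C}$, both nonzero, such that $b_{n+2}\beta_j=a_1^{2j-3}\beta'_j$ for all $\lfloor\frac{n+5}{2}\rfloor\le j\le n+1$.
   Context: $L(\beta_{\lfloor\frac{n+5}{2}\rfloor},\dots,\beta_{n+1})$ denotes the complex Leibniz superalgebra with even basis $x_1,\dots,x_n$, odd basis $y_1,\dots,y_{n+2}$ and products $[x_i,x_1]=x_{i+1}$ ($1\le i\le n-1$), $[y_j,x_1]=y_{j+1}$ ($1\le j\le n$), $[x_i,y_1]=\tfrac12 y_{i+1}$ ($1\le i\le n$), $[y_j,y_1]=x_j$ ($1\le j\le n$), $[x_i,y_{n+2}]=\sum_{k=\lfloor\frac{n+5}{2}\rfloor}^{n+2-i}\beta_k y_{k-1+i}$ ($1\le i\le\lfloor\frac n2\rfloor$), $[y_j,y_{n+2}]=-2\sum_{k=\lfloor\frac{n+5}{2}\rfloor}^{n+2-j}\beta_k x_{k-2+j}$ ($1\le j\le\lfloor\frac n2\rfloor$), all other products of basis elements zero. A Leibniz superalgebra is a $\mathbb{Z}_2$-graded vector space with a bilinear product respecting the grading and satisfying $[x,[y,z]]=[[x,y],z]-(-1)^{\alpha\beta}[[x,z],y]$ for $y\in L_\alpha,z\in L_\beta$; an isomorphism is a grading-preserving bijective linear map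 preserving the product. $\lfloor\cdot\rfloor$ is the integer part. *)

theory Defs
  imports Complex_Main
begin

text \<open>Basis indices of the superalgebra: X i = x_i (even), Y j = y_j (odd).
  Elements of the algebra are coordinate functions on these indices, supported
  on the basis x_1..x_n, y_1..y_(n+2).\<close>

datatype bidx = X nat | Y nat

type_synonym vec = "bidx \<Rightarrow> complex"

definition even_basis :: "nat \<Rightarrow> bidx set" where
  "even_basis n = X ` {1..n}"

definition odd_basis :: "nat \<Rightarrow> bidx set" where
  "odd_basis n = Y ` {1..n+2}"

definition basis :: "nat \<Rightarrow> bidx set" where
  "basis n = even_basis n \<union> odd_basis n"

definition sspace :: "nat \<Rightarrow> vec set" where
  "sspace n = {u. \<forall>b. u b \<noteq> 0 \<longrightarrow> b \<in> basis n}"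

definition even_part :: "nat \<Rightarrow> vec set" where
  "even_part n = {u. \<forall>b. u b \<noteq> 0 \<longrightarrow> b \<in> even_basis n}"

definition odd_part :: "nat \<Rightarrow> vec set" where
  "odd_part n = {u. \<forall>b. u b \<noteq> 0 \<longrightarrow> b \<in> odd_basis n}"

definition ev :: "bidx \<Rightarrow> vec" where
  "ev b = (\<lambda>c. if c = b then 1 else 0)"

definition lb :: "nat \<Rightarrow> nat" where
  "lb n = (n + 5) div 2"

definition bprod :: "nat \<Rightarrow> (nat \<Rightarrow> complex) \<Rightarrow> bidx \<Rightarrow> bidx \<Rightarrow> vec" where
  "bprod n \<beta> a b =
    (case (a, b) of
      (X i, X l) \<Rightarrow> if l = 1 \<and> 1 \<le> i \<and> i \<le> n - 1 then ev (X (i+1)) else (\<lambda>_. 0)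
    | (Y j, X l) \<Rightarrow> if l = 1 \<and> 1 \<le> j \<and> j \<le> n then ev (Y (j+1)) else (\<lambda>_. 0)
    | (X i, Y l) \<Rightarrow>
        if l = 1 \<and> 1 \<le> i \<and> i \<le> n then (\<lambda>c. (1/2) * ev (Y (i+1)) c)
        else if l = n + 2 \<and> 1 \<le> i \<and> i \<le> n div 2
          then (\<lambda>c. \<Sum>k\<in>{lb n..n+2-i}. \<beta> k * ev (Y (k - 1 + i)) c)
        else (\<lambda>_. 0)
    | (Y j, Y l) \<Rightarrow>
        if l = 1 \<and> 1 \<le> j \<and> j \<le> n then ev (X j)
        else if l = n + 2 \<and> 1 \<le> j \<and> j \<le> n div 2
          then (\<lambda>c. -2 * (\<Sum>k\<in>{lb n..n+2-j}. \<beta> k * ev (X (k - 2 + j)) c))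
        else (\<lambda>_. 0))"

definition lprod :: "nat \<Rightarrow> (nat \<Rightarrow> complex) \<Rightarrow> vec \<Rightarrow> vec \<Rightarrow> vec" where
  "lprod n \<beta> u v = (\<lambda>c. \<Sum>a\<in>basis n. \<Sum>b\<in>basis n. u a * v b * bprod n \<beta> a b c)"

definition super_iso :: "nat \<Rightarrow> (nat \<Rightarrow> complex) \<Rightarrow> (nat \<Rightarrow> complex) \<Rightarrow> (vec \<Rightarrow> vec) \<Rightarrow> bool" where
  "super_iso n \<beta> \<beta>' \<phi> \<longleftrightarrow>
     (\<forall>u\<in>sspace n. \<forall>v\<in>sspace n. \<forall>s t::complex.
        \<phi> (\<lambda>c. s * u c + t * v c) = (\<lambda>c. s * \<phi> u c + t * \<phi> v c)) \<and>
     bij_betw \<phi> (sspace n) (sspace n) \<and>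
     \<phi> ` even_part n \<subseteq> even_part n \<and>
     \<phi> ` odd_part n \<subseteq> odd_part n \<and>
     (\<forall>u\<in>sspace n. \<forall>v\<in>sspace n. \<phi> (lprod n \<beta> u v) = lprod n \<beta>' (\<phi> u) (\<phi> v))"

definition isomorphic_L :: "nat \<Rightarrow> (nat \<Rightarrow> complex) \<Rightarrow> (nat \<Rightarrow> complex) \<Rightarrow> bool" where
  "isomorphic_L n \<beta> \<beta>' \<longleftrightarrow> (\<exists>\<phi>. super_iso n \<beta> \<beta>' \<phi>)"

end

theory Submission
  imports Defs
begin


lemma sum_single:
  assumes "finite S" "\<And>i. i \<in> S \<Longrightarrow> i \<noteq> zz \<Longrightarrow> f i = 0"
  shows "sum f S = (if zz \<in> S then f zz else 0)"
proof (cases "zz \<in> S")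
  case True
  then have "sum f S = f zz + sum f (S - {zz})" using assms(1) by (simp add: sum.remove)
  also have "sum f (S - {zz}) = 0" using assms(2) by (intro sum.neutral) auto
  finally show ?thesis using True by simp
next
  case False
  then show ?thesis using assms by (intro trans[OF sum.neutral]) auto
qed

lemma finite_basis: "finite (basis n)"
  by (simp add: basis_def even_basis_def odd_basis_def)

lemma sum_basis:
  "(\<Sum>a\<in>basis n. f a) = (\<Sum>i\<in>{1..n}. f (X i)) + (\<Sum>j\<in>{1..n+2}. f (Y j))"
proof -
  have "(\<Sum>a\<in>basis n. f a) = sum f (X ` {1..n}) + sum f (Y ` {1..n+2})"
    unfolding basis_def even_basis_def odd_basis_def
    by (rule sum.union_disjoint) auto
  also have "sum f (X ` {1..n}) = (\<Sum>i\<in>{1..n}. f (X i))"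
    by (subst sum.reindex) (auto simp: inj_on_def)
  also have "sum f (Y ` {1..n+2}) = (\<Sum>j\<in>{1..n+2}. f (Y j))"
    by (subst sum.reindex) (auto simp: inj_on_def)
  finally show ?thesis .
qed

lemma bprod_zero:
  assumes "b \<noteq> X 1" "b \<noteq> Y 1" "b \<noteq> Y (n+2)"
  shows "bprod n \<beta> a b = (\<lambda>_. 0)"
  using assms by (cases a; cases b) (auto simp: bprod_def)

definition P :: "nat \<Rightarrow> (nat \<Rightarrow> complex) \<Rightarrow> bidx \<Rightarrow> vec \<Rightarrow> vec" where
  "P n \<beta> b u = (\<lambda>c. \<Sum>a\<in>basis n. u a * bprod n \<beta> a b c)"

lemma in_basis: "X 1 \<in> basis n \<longleftrightarrow> n \<ge> 1" "Y 1 \<in> basis n" "Y (n+2) \<in> basis n"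
  "X i \<in> basis n \<longleftrightarrow> 1 \<le> i \<and> i \<le> n" "Y j \<in> basis n \<longleftrightarrow> 1 \<le> j \<and> j \<le> n+2"
  by (auto simp: basis_def even_basis_def odd_basis_def)

lemma lprod_expand:
  assumes "n \<ge> 1"
  shows "lprod n \<beta> u v = (\<lambda>c. v (X 1) * P n \<beta> (X 1) u c + v (Y 1) * P n \<beta> (Y 1) u c
      + v (Y (n+2)) * P n \<beta> (Y (n+2)) u c)"
proof
  fix c
  have inner: "(\<Sum>b\<in>basis n. u a * v b * bprod n \<beta> a b c) =
     u a * v (X 1) * bprod n \<beta> a (X 1) c + u a * v (Y 1) * bprod n \<beta> a (Y 1) c
      + u a * v (Y (n+2)) * bprod n \<beta> a (Y (n+2)) c" for a
  proof -
    have "(\<Sum>b\<in>basis n. u a * v b * bprod n \<beta> a b c) = (\<Sum>b\<in>{X 1, Y 1, Y (n+2)}. u a * v b * bprod n \<beta> a b c)"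
      using assms by (intro sum.mono_neutral_right) (auto simp: finite_basis in_basis bprod_zero)
    also have "\<dots> = u a * v (X 1) * bprod n \<beta> a (X 1) c + u a * v (Y 1) * bprod n \<beta> a (Y 1) c
      + u a * v (Y (n+2)) * bprod n \<beta> a (Y (n+2)) c" by simp
    finally show ?thesis .
  qed
  show "lprod n \<beta> u v c = v (X 1) * P n \<beta> (X 1) u c + v (Y 1) * P n \<beta> (Y 1) u c
      + v (Y (n+2)) * P n \<beta> (Y (n+2)) u c"
    unfolding lprod_def P_def inner
    by (simp add: sum.distrib sum_distrib_left algebra_simps)
qed


lemma P1X: "P n \<beta> (X 1) u (X m) = (if 2 \<le> m \<and> m \<le> n then u (X (m-1)) else 0)"
proof -
  have "(\<Sum>i\<in>{1..n}. u (X i) * bprod n \<beta> (X i) (X 1) (X m)) = (if 2 \<le> m \<and> m \<le> n then u (X (m-1)) else 0)"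
    by (subst sum_single[where zz="m-1"]) (auto simp: bprod_def ev_def)
  moreover have "(\<Sum>j\<in>{1..n+2}. u (Y j) * bprod n \<beta> (Y j) (X 1) (X m)) = 0"
    by (intro sum.neutral) (auto simp: bprod_def ev_def)
  ultimately show ?thesis by (simp add: P_def sum_basis)
qed

lemma P1Y: "P n \<beta> (X 1) u (Y m) = (if 2 \<le> m \<and> m \<le> n+1 then u (Y (m-1)) else 0)"
proof -
  have "(\<Sum>i\<in>{1..n+2}. u (Y i) * bprod n \<beta> (Y i) (X 1) (Y m)) = (if 2 \<le> m \<and> m \<le> n+1 then u (Y (m-1)) else 0)"
    by (subst sum_single[where zz="m-1"]) (auto simp: bprod_def ev_def)
  moreover have "(\<Sum>j\<in>{1..n}. u (X j) * bprod n \<beta> (X j) (X 1) (Y m)) = 0"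
    by (intro sum.neutral) (auto simp: bprod_def ev_def)
  ultimately show ?thesis by (simp add: P_def sum_basis)
qed

lemma P2X: "P n \<beta> (Y 1) u (X m) = (if 1 \<le> m \<and> m \<le> n then u (Y m) else 0)"
proof -
  have "(\<Sum>i\<in>{1..n+2}. u (Y i) * bprod n \<beta> (Y i) (Y 1) (X m)) = (if 1 \<le> m \<and> m \<le> n then u (Y m) else 0)"
    by (subst sum_single[where zz="m"]) (auto simp: bprod_def ev_def)
  moreover have "(\<Sum>j\<in>{1..n}. u (X j) * bprod n \<beta> (X j) (Y 1) (X m)) = 0"
    by (intro sum.neutral) (auto simp: bprod_def ev_def)
  ultimately show ?thesis by (simp add: P_def sum_basis)
qed

lemma P2Y: "P n \<beta> (Y 1) u (Y m) = (if 2 \<le> m \<and> m \<le> n+1 then u (X (m-1)) / 2 else 0)"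
proof -
  have "(\<Sum>i\<in>{1..n}. u (X i) * bprod n \<beta> (X i) (Y 1) (Y m)) = (if 2 \<le> m \<and> m \<le> n+1 then u (X (m-1)) / 2 else 0)"
    by (subst sum_single[where zz="m-1"]) (auto simp: bprod_def ev_def)
  moreover have "(\<Sum>j\<in>{1..n+2}. u (Y j) * bprod n \<beta> (Y j) (Y 1) (Y m)) = 0"
    by (intro sum.neutral) (auto simp: bprod_def ev_def)
  ultimately show ?thesis by (simp add: P_def sum_basis)
qed

lemma P3X: assumes "m + 1 < lb n"
  shows "P n \<beta> (Y (n+2)) u (X m) = 0"
proof -
  have "(\<Sum>i\<in>{1..n}. u (X i) * bprod n \<beta> (X i) (Y (n+2)) (X m)) = 0"
    by (intro sum.neutral) (auto simp: bprod_def ev_def)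
  moreover have "(\<Sum>j\<in>{1..n+2}. u (Y j) * bprod n \<beta> (Y j) (Y (n+2)) (X m)) = 0"
  proof (intro sum.neutral ballI)
    fix j assume j: "j \<in> {1..n+2}"
    have "(\<Sum>k\<in>{lb n..n+2-j}. \<beta> k * ev (X (k - 2 + j)) (X m)) = 0"
      using assms j by (intro sum.neutral) (auto simp: ev_def)
    then show "u (Y j) * bprod n \<beta> (Y j) (Y (n+2)) (X m) = 0"
      by (auto simp: bprod_def)
  qed
  ultimately show ?thesis by (simp add: P_def sum_basis)
qed

lemma P3Y: "P n \<beta> (Y (n+2)) u (Y m) =
   (\<Sum>i\<in>{1..n div 2}. u (X i) * (if lb n + i \<le> m + 1 \<and> m \<le> n + 1 then \<beta> (m + 1 - i) else 0))"
proof -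
  have "(\<Sum>i\<in>{1..n}. u (X i) * bprod n \<beta> (X i) (Y (n+2)) (Y m)) = 
     (\<Sum>i\<in>{1..n}. if i \<le> n div 2 then u (X i) * (if lb n + i \<le> m + 1 \<and> m \<le> n + 1 then \<beta> (m + 1 - i) else 0) else 0)"
  proof (intro sum.cong refl)
    fix i assume i: "i \<in> {1..n}"
    have "(\<Sum>k\<in>{lb n..n+2-i}. \<beta> k * ev (Y (k - 1 + i)) (Y m)) = (if lb n + i \<le> m + 1 \<and> m \<le> n + 1 then \<beta> (m + 1 - i) else 0)"
      using i by (subst sum_single[where zz="m+1-i"]) (auto simp: ev_def lb_def)
    then show "u (X i) * bprod n \<beta> (X i) (Y (n+2)) (Y m) = (if i \<le> n div 2 then u (X i) * (if lb n + i \<le> m + 1 \<and> m \<le> n + 1 then \<beta> (m + 1 - i) else 0) else 0)"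
      using i by (auto simp: bprod_def)
  qed
  also have "\<dots> = (\<Sum>i\<in>{1..n div 2}. u (X i) * (if lb n + i \<le> m + 1 \<and> m \<le> n + 1 then \<beta> (m + 1 - i) else 0))"
    by (subst sum.If_cases) (auto intro!: sum.cong)
  finally have 1: "(\<Sum>i\<in>{1..n}. u (X i) * bprod n \<beta> (X i) (Y (n+2)) (Y m)) = \<dots>" .
  moreover have "(\<Sum>j\<in>{1..n+2}. u (Y j) * bprod n \<beta> (Y j) (Y (n+2)) (Y m)) = 0"
    by (intro sum.neutral) (auto simp: bprod_def ev_def)
  ultimately show ?thesis by (simp add: P_def sum_basis)
qed


definition dg :: "nat \<Rightarrow> complex \<Rightarrow> complex \<Rightarrow> bidx \<Rightarrow> complex" where
  "dg n e g b = (case b of X i \<Rightarrow> e ^ (2*i) | Y j \<Rightarrow> if j = n+2 then g else e ^ (2*j-1))"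

lemma ev_trick: "f c * ev b c = f b * ev b c"
  by (simp add: ev_def)

lemma dg_key:
  assumes e: "e \<noteq> 0" and H: "\<forall>k\<in>{lb n..n+1}. \<beta> k * e^(2*k-3) = g * \<beta>' k"
  shows "dg n e g c * bprod n \<beta> a b c = dg n e g a * dg n e g b * bprod n \<beta>' a b c"
proof (cases a)
  case (X i)
  show ?thesis
  proof (cases b)
    case (X l)
    show ?thesis using \<open>a = X i\<close> X
      by (auto simp: bprod_def ev_trick[of "dg n e g"] dg_def power_add[symmetric])
       (auto simp: ev_def)
  next
    case (Y l)
    show ?thesis
    proof (cases "l = 1 \<and> 1 \<le> i \<and> i \<le> n")
      case True
      have "dg n e g (Y (i+1)) = e^(2*i) * e" using True by (simp add: dg_def power_add[symmetric])
      then show ?thesis using True \<open>a = X i\<close> Y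
        by (simp add: bprod_def dg_def) (simp add: ev_def)
    next
      case False
      show ?thesis
      proof (cases "l = n + 2 \<and> 1 \<le> i \<and> i \<le> n div 2")
        case True
        have "dg n e g c * (\<Sum>k\<in>{lb n..n+2-i}. \<beta> k * ev (Y (k - 1 + i)) c)
           = (\<Sum>k\<in>{lb n..n+2-i}. \<beta> k * dg n e g (Y (k - 1 + i)) * ev (Y (k - 1 + i)) c)"
          by (simp add: sum_distrib_left) (intro sum.cong refl, simp add: ev_def)
        also have "\<dots> = (\<Sum>k\<in>{lb n..n+2-i}. e^(2*i) * g * (\<beta>' k * ev (Y (k - 1 + i)) c))"
        proof (intro sum.cong refl)
          fix k assume k: "k \<in> {lb n..n+2-i}"
          then have k3: "k \<ge> 3" "k - 1 + i \<noteq> n + 2" "k \<le> n+1" using True by (auto simp: lb_def)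
          have "dg n e g (Y (k - 1 + i)) = e^(2*i) * e^(2*k-3)"
            using k3 by (simp add: dg_def power_add[symmetric]) (intro arg_cong[where f="\<lambda>x. e^x"], linarith)
          moreover have "\<beta> k * e^(2*k-3) = g * \<beta>' k" using H k k3 by auto
          ultimately show "\<beta> k * dg n e g (Y (k - 1 + i)) * ev (Y (k - 1 + i)) c = e^(2*i) * g * (\<beta>' k * ev (Y (k - 1 + i)) c)"
            by (simp add: algebra_simps)
        qed
        also have "\<dots> = e^(2*i) * g * (\<Sum>k\<in>{lb n..n+2-i}. \<beta>' k * ev (Y (k - 1 + i)) c)"
          by (simp add: sum_distrib_left)
        finally show ?thesis using True False \<open>a = X i\<close> Y by (simp add: bprod_def dg_def)
      next
        case False2: False
        show ?thesis using False False2 \<open>a = X i\<close> Y by (auto simp: bprod_def)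
      qed
    qed
  qed
next
  case (Y j)
  show ?thesis
  proof (cases b)
    case (X l)
    show ?thesis
    proof (cases "l = 1 \<and> 1 \<le> j \<and> j \<le> n")
      case True
      have "dg n e g (Y (j+1)) = e^(2*j-1) * e^2" using True by (simp add: dg_def power_add[symmetric])
      then show ?thesis using True \<open>a = Y j\<close> X
        by (simp add: bprod_def dg_def) (simp add: ev_def)
    next
      case False
      then show ?thesis using \<open>a = Y j\<close> X by (auto simp: bprod_def)
    qed
  next
    case (Y l)
    show ?thesis
    proof (cases "l = 1 \<and> 1 \<le> j \<and> j \<le> n")
      case True
      have "dg n e g (X j) = e^(2*j-1) * e" using True by (cases j) (auto simp: dg_def)
      then show ?thesis using True \<open>a = Y j\<close> Y
        by (simp add: bprod_def dg_def) (simp add: ev_def)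
    next
      case False
      show ?thesis
      proof (cases "l = n + 2 \<and> 1 \<le> j \<and> j \<le> n div 2")
        case True
        have "dg n e g c * (\<Sum>k\<in>{lb n..n+2-j}. \<beta> k * ev (X (k - 2 + j)) c)
           = (\<Sum>k\<in>{lb n..n+2-j}. \<beta> k * dg n e g (X (k - 2 + j)) * ev (X (k - 2 + j)) c)"
          by (simp add: sum_distrib_left) (intro sum.cong refl, simp add: ev_def)
        also have "\<dots> = (\<Sum>k\<in>{lb n..n+2-j}. e^(2*j-1) * g * (\<beta>' k * ev (X (k - 2 + j)) c))"
        proof (intro sum.cong refl)
          fix k assume k: "k \<in> {lb n..n+2-j}"
          then have k3: "k \<ge> 3" "k \<le> n+1" using True by (auto simp: lb_def)
          have "dg n e g (X (k - 2 + j)) = e^(2*j-1) * e^(2*k-3)"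
            using k3 True by (simp add: dg_def power_add[symmetric]) (intro arg_cong[where f="\<lambda>x. e^x"], linarith)
          moreover have "\<beta> k * e^(2*k-3) = g * \<beta>' k" using H k k3 by auto
          ultimately show "\<beta> k * dg n e g (X (k - 2 + j)) * ev (X (k - 2 + j)) c = e^(2*j-1) * g * (\<beta>' k * ev (X (k - 2 + j)) c)"
            by (simp add: algebra_simps)
        qed
        also have "\<dots> = e^(2*j-1) * g * (\<Sum>k\<in>{lb n..n+2-j}. \<beta>' k * ev (X (k - 2 + j)) c)"
          by (simp add: sum_distrib_left)
        moreover have "j \<noteq> n+2" using True by auto
        ultimately show ?thesis using True False \<open>a = Y j\<close> Y by (simp add: bprod_def dg_def)
      next
        case False2: False
        show ?thesis using False False2 \<open>a = Y j\<close> Y by (auto simp: bprod_def)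
      qed
    qed
  qed
qed


lemma construct_iso:
  assumes e: "e \<noteq> 0" and g: "g \<noteq> 0" and H: "\<forall>k\<in>{lb n..n+1}. \<beta> k * e^(2*k-3) = g * \<beta>' k"
  shows "isomorphic_L n \<beta> \<beta>'"
proof -
  define \<phi> where "\<phi> = (\<lambda>u::vec. \<lambda>c. dg n e g c * u c)"
  have nz: "dg n e g c \<noteq> 0" for c using e g by (cases c) (auto simp: dg_def)
  have lin: "\<phi> (\<lambda>c. s * u c + t * v c) = (\<lambda>c. s * \<phi> u c + t * \<phi> v c)" for u v s t
    by (simp add: \<phi>_def algebra_simps)
  have inj: "inj_on \<phi> (sspace n)"
  proof (rule inj_onI)
    fix u v assume "\<phi> u = \<phi> v"
    then have "dg n e g c * u c = dg n e g c * v c" for c by (metis \<phi>_def)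
    then show "u = v" using nz by (intro ext) simp
  qed
  have supp: "\<phi> u c \<noteq> 0 \<longleftrightarrow> u c \<noteq> 0" for u c using nz by (simp add: \<phi>_def)
  have img: "\<phi> ` sspace n = sspace n"
  proof
    show "\<phi> ` sspace n \<subseteq> sspace n" using supp by (auto simp: sspace_def)
    show "sspace n \<subseteq> \<phi> ` sspace n"
    proof
      fix v assume v: "v \<in> sspace n"
      have "v = \<phi> (\<lambda>c. v c / dg n e g c)" using nz by (auto simp: \<phi>_def)
      moreover have "(\<lambda>c. v c / dg n e g c) \<in> sspace n" using v nz by (auto simp: sspace_def)
      ultimately show "v \<in> \<phi> ` sspace n" by blast
    qed
  qed
  have ev: "\<phi> ` even_part n \<subseteq> even_part n" using supp by (auto simp: even_part_def)
  have od: "\<phi> ` odd_part n \<subseteq> odd_part n" using supp by (auto simp: odd_part_def)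
  have pr: "\<phi> (lprod n \<beta> u v) = lprod n \<beta>' (\<phi> u) (\<phi> v)" for u v
  proof
    fix c
    have "\<phi> (lprod n \<beta> u v) c = (\<Sum>a\<in>basis n. \<Sum>b\<in>basis n. u a * v b * (dg n e g c * bprod n \<beta> a b c))"
      by (simp add: \<phi>_def lprod_def sum_distrib_left algebra_simps)
    also have "\<dots> = (\<Sum>a\<in>basis n. \<Sum>b\<in>basis n. u a * v b * (dg n e g a * dg n e g b * bprod n \<beta>' a b c))"
      by (simp add: dg_key[OF e H])
    also have "\<dots> = lprod n \<beta>' (\<phi> u) (\<phi> v) c"
      by (simp add: \<phi>_def lprod_def algebra_simps)
    finally show "\<phi> (lprod n \<beta> u v) c = lprod n \<beta>' (\<phi> u) (\<phi> v) c" .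
  qed
  have "super_iso n \<beta> \<beta>' \<phi>"
    unfolding super_iso_def using lin inj img ev od pr by (auto simp: bij_betw_def)
  then show ?thesis unfolding isomorphic_L_def by blast
qed


lemma lprod_ev:
  assumes "a \<in> basis n" "b \<in> basis n"
  shows "lprod n \<beta> (ev a) (ev b) = bprod n \<beta> a b"
proof
  fix c
  have "(\<Sum>b'\<in>basis n. ev a a' * ev b b' * bprod n \<beta> a' b' c) = ev a a' * bprod n \<beta> a' b c" for a'
    using assms by (subst sum_single[where zz=b]) (auto simp: finite_basis ev_def)
  then have "lprod n \<beta> (ev a) (ev b) c = (\<Sum>a'\<in>basis n. ev a a' * bprod n \<beta> a' b c)"
    by (simp add: lprod_def)
  also have "\<dots> = bprod n \<beta> a b c"
    using assms by (subst sum_single[where zz=a]) (auto simp: finite_basis ev_def)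
  finally show "lprod n \<beta> (ev a) (ev b) c = bprod n \<beta> a b c" .
qed

lemma lprod_left_ev:
  assumes "a \<in> basis n"
  shows "lprod n \<beta> (ev a) v c = (\<Sum>b\<in>basis n. v b * bprod n \<beta> a b c)"
proof -
  have "lprod n \<beta> (ev a) v c = (\<Sum>a'\<in>basis n. ev a a' * (\<Sum>b\<in>basis n. v b * bprod n \<beta> a' b c))"
    by (simp add: lprod_def sum_distrib_left algebra_simps)
  also have "\<dots> = (\<Sum>b\<in>basis n. v b * bprod n \<beta> a b c)"
    using assms by (subst sum_single[where zz=a]) (auto simp: finite_basis ev_def)
  finally show ?thesis .
qed

lemma odd_X: "u \<in> odd_part n \<Longrightarrow> u (X i) = 0"
  by (auto simp: odd_part_def odd_basis_def)
lemma even_Y: "u \<in> even_part n \<Longrightarrow> u (Y i) = 0"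
  by (auto simp: even_part_def even_basis_def)
lemma sspace_X: "u \<in> sspace n \<Longrightarrow> \<not> (1 \<le> i \<and> i \<le> n) \<Longrightarrow> u (X i) = 0"
  by (auto simp: sspace_def in_basis)
lemma sspace_Y: "u \<in> sspace n \<Longrightarrow> \<not> (1 \<le> i \<and> i \<le> n+2) \<Longrightarrow> u (Y i) = 0"
  by (auto simp: sspace_def in_basis)
lemma odd_sub: "odd_part n \<subseteq> sspace n"
  by (auto simp: odd_part_def sspace_def basis_def)
lemma even_sub: "even_part n \<subseteq> sspace n"
  by (auto simp: even_part_def sspace_def basis_def)
lemma ev_sspace: "b \<in> basis n \<Longrightarrow> ev b \<in> sspace n"
  by (auto simp: sspace_def ev_def)
lemma evX_even: "1 \<le> i \<Longrightarrow> i \<le> n \<Longrightarrow> ev (X i) \<in> even_part n"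
  by (auto simp: even_part_def ev_def even_basis_def)
lemma evY_odd: "1 \<le> i \<Longrightarrow> i \<le> n+2 \<Longrightarrow> ev (Y i) \<in> odd_part n"
  by (auto simp: odd_part_def ev_def odd_basis_def)

lemma lin_sum:
  assumes lin: "\<forall>u\<in>sspace n. \<forall>v\<in>sspace n. \<forall>s t::complex.
        \<phi> (\<lambda>c. s * u c + t * v c) = (\<lambda>c. s * \<phi> u c + t * \<phi> v c)"
    and fin: "finite K" and w: "\<forall>k\<in>K. w k \<in> sspace n"
  shows "\<phi> (\<lambda>c. \<Sum>k\<in>K. f k * w k c) = (\<lambda>c. \<Sum>k\<in>K. f k * \<phi> (w k) c)"
  using fin w
proof (induction K rule: finite_induct)
  case empty
  have z: "(\<lambda>_. 0::complex) \<in> sspace n" by (simp add: sspace_def)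
  show ?case using lin[rule_format, OF z z, of 0 0] by simp
next
  case (insert x F)
  have s: "(\<lambda>c. \<Sum>k\<in>F. f k * w k c) \<in> sspace n"
  proof -
    { fix c assume "(\<Sum>k\<in>F. f k * w k c) \<noteq> 0"
      then obtain k where "k \<in> F" "w k c \<noteq> 0" by (metis (mono_tags, lifting) mult_zero_right sum.neutral)
      then have "c \<in> basis n" using insert.prems by (auto simp: sspace_def) }
    then show ?thesis by (auto simp: sspace_def)
  qed
  have wx: "w x \<in> sspace n" using insert.prems by auto
  have "\<phi> (\<lambda>c. \<Sum>k\<in>insert x F. f k * w k c) = \<phi> (\<lambda>c. f x * w x c + 1 * (\<Sum>k\<in>F. f k * w k c))"
    using insert.hyps by simp
  also have "\<dots> = (\<lambda>c. f x * \<phi> (w x) c + 1 * \<phi> (\<lambda>c. \<Sum>k\<in>F. f k * w k c) c)"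
    using lin[rule_format, OF wx s, of "f x" 1] by simp
  also have "\<dots> = (\<lambda>c. \<Sum>k\<in>insert x F. f k * \<phi> (w k) c)"
    using insert by simp
  finally show ?case .
qed


lemma lb_ge3: "n \<ge> 1 \<Longrightarrow> lb n \<ge> 3" unfolding lb_def by presburger
lemma lb_div: "lb n + n div 2 = n + 2" unfolding lb_def by presburger

lemmas Pl = P1X P1Y P2X P2Y P1X[unfolded One_nat_def] P1Y[unfolded One_nat_def] P2X[unfolded One_nat_def] P2Y[unfolded One_nat_def]

lemma forward:
  assumes n2: "n \<ge> 2" and iso: "super_iso n \<beta> \<beta>' \<phi>"
  shows "\<exists>a1 b::complex. a1 \<noteq> 0 \<and> b \<noteq> 0 \<and>
       (\<forall>j\<in>{(n + 5) div 2..n+1}. b * \<beta> j = a1 ^ (2 * j - 3) * \<beta>' j)"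
proof -
  have n1: "n \<ge> 1" using n2 by simp
  have lin: "\<forall>u\<in>sspace n. \<forall>v\<in>sspace n. \<forall>s t::complex.
        \<phi> (\<lambda>c. s * u c + t * v c) = (\<lambda>c. s * \<phi> u c + t * \<phi> v c)"
   and bij: "bij_betw \<phi> (sspace n) (sspace n)"
   and evp: "\<phi> ` even_part n \<subseteq> even_part n"
   and odp: "\<phi> ` odd_part n \<subseteq> odd_part n"
   and pr: "\<And>u v. u \<in> sspace n \<Longrightarrow> v \<in> sspace n \<Longrightarrow> \<phi> (lprod n \<beta> u v) = lprod n \<beta>' (\<phi> u) (\<phi> v)"
    using iso unfolding super_iso_def by auto
  have inj: "inj_on \<phi> (sspace n)" and img: "\<phi> ` sspace n = sspace n"
    using bij by (auto simp: bij_betw_def)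
  have z: "(\<lambda>_. 0::complex) \<in> sspace n" by (simp add: sspace_def)
  have phi0: "\<phi> (\<lambda>_. 0) = (\<lambda>_. 0)" using lin[rule_format, OF z z, of 0 0] by simp
  have smul: "\<phi> (\<lambda>c. t * u c) = (\<lambda>c. t * \<phi> u c)" if "u \<in> sspace n" for u t
    using lin[rule_format, OF that that, of t 0] by simp
  have add: "\<phi> (\<lambda>c. u c + v c) = (\<lambda>c. \<phi> u c + \<phi> v c)" if "u \<in> sspace n" "v \<in> sspace n" for u v
    using lin[rule_format, OF that, of 1 1] by simp
  have evX1: "ev (X 1) \<in> sspace n" using n1 by (intro ev_sspace) (simp add: in_basis)
  have evY: "ev (Y j) \<in> sspace n" if "1 \<le> j" "j \<le> n+2" for j using that by (intro ev_sspace) (simp add: in_basis)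
  define A where "A = \<phi> (ev (X 1))"
  define B where "B = \<phi> (ev (Y 1))"
  define C where "C = \<phi> (ev (Y (n+2)))"
  define a where "a = A (X 1)"
  define b1 where "b1 = B (Y 1)"
  define c where "c = C (Y (n+2))"
  have Aeven: "A \<in> even_part n" using evp evX_even[of 1 n] n1 unfolding A_def by auto
  have Bodd: "B \<in> odd_part n" using odp evY_odd[of 1 n] unfolding B_def by auto
  have Codd: "C \<in> odd_part n" using odp evY_odd[of "n+2" n] unfolding C_def by auto
  have phiS: "\<phi> u \<in> sspace n" if "u \<in> sspace n" for u using img that by auto

  have C0: "C (Y j) = 0" if "1 \<le> j" "j \<le> n" for j
  proof -
    obtain w where w: "w \<in> sspace n" "\<phi> w = ev (X 1)" using img evX1 by (metis imageE)
    have "lprod n \<beta> (ev (Y (n+2))) w = (\<lambda>_. 0)"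
    proof
      fix x
      have "bprod n \<beta> (Y (n+2)) b = (\<lambda>_. 0)" for b by (cases b) (auto simp: bprod_def)
      then show "lprod n \<beta> (ev (Y (n+2))) w x = 0"
        by (subst lprod_left_ev) (auto simp: in_basis)
    qed
    then have "lprod n \<beta>' C (ev (X 1)) = (\<lambda>_. 0)"
      using pr[OF evY[of "n+2"] w(1)] w(2) phi0 unfolding C_def by simp
    then have "lprod n \<beta>' C (ev (X 1)) (Y (j+1)) = 0" by simp
    then show ?thesis using that P1Y[of n \<beta>' C "j+1"] by (simp add: lprod_expand[OF n1] ev_def)
  qed

  have stepY: "\<phi> (ev (Y (k+1))) (Y m) = a * (if 2 \<le> m \<and> m \<le> n+1 then \<phi> (ev (Y k)) (Y (m-1)) else 0)"
    if "1 \<le> k" "k \<le> n" for k m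
  proof -
    have "ev (Y (k+1)) = lprod n \<beta> (ev (Y k)) (ev (X 1))"
      using that n1 by (subst lprod_ev) (auto simp: in_basis bprod_def)
    then have "\<phi> (ev (Y (k+1))) = lprod n \<beta>' (\<phi> (ev (Y k))) A"
      using pr[OF evY evX1] that unfolding A_def by simp
    then show ?thesis
      using even_Y[OF Aeven] by (simp add: lprod_expand[OF n1] Pl a_def)
  qed
  have Q: "\<forall>m. 1 \<le> m \<longrightarrow> m \<le> n+1 \<longrightarrow> \<phi> (ev (Y k)) (Y m) = (if k \<le> m then a^(k-1) * B (Y (m+1-k)) else 0)"
    if "1 \<le> k" "k \<le> n+1" for k
    using that
  proof (induction k rule: dec_induct)
    case base
    then show ?case by (simp add: B_def)
  next
    case (step k)
    show ?case
    proof (intro allI impI)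
      fix m assume m: "1 \<le> m" "m \<le> n+1"
      show "\<phi> (ev (Y (Suc k))) (Y m) = (if Suc k \<le> m then a^(Suc k-1) * B (Y (m+1-Suc k)) else 0)"
      proof (cases "2 \<le> m")
        case True
        have "\<phi> (ev (Y (k+1))) (Y m) = a * \<phi> (ev (Y k)) (Y (m-1))"
          using stepY[of k m] step m True by simp
        also have "\<phi> (ev (Y k)) (Y (m-1)) = (if k \<le> m-1 then a^(k-1) * B (Y (m-1+1-k)) else 0)"
          using step.IH step.prems m True by auto
        finally show ?thesis using True step(1) m
          by (cases k) (auto simp: Suc_diff_le)
      next
        case False
        then show ?thesis using stepY[of k m] step m by simp
      qed
    qed
  qed
  have Qtop: "\<phi> (ev (Y (n+1))) (Y (n+2)) = 0"
    using stepY[of n "n+2"] n1 by simp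

  have b1nz: "b1 \<noteq> 0"
  proof
    assume b0: "b1 = 0"
    obtain w where w: "w \<in> sspace n" "\<phi> w = ev (X 1)" using img evX1 by (metis imageE)
    define we where "we = (\<lambda>x. case x of X i \<Rightarrow> w x | Y j \<Rightarrow> 0)"
    define wo where "wo = (\<lambda>x. case x of X i \<Rightarrow> 0 | Y j \<Rightarrow> w x)"
    define w' where "w' = (\<lambda>x. case x of X i \<Rightarrow> 0 | Y j \<Rightarrow> if 1 \<le> j \<and> j \<le> n then w (X j) else 0)"
    have weS: "we \<in> sspace n" using w(1) by (auto simp: sspace_def we_def split: bidx.splits)
    have woO: "wo \<in> odd_part n" using w(1)
      by (auto simp: sspace_def odd_part_def wo_def basis_def even_basis_def split: bidx.splits)
    have woS: "wo \<in> sspace n" using woO odd_sub by auto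
    have w'S: "w' \<in> sspace n" by (auto simp: sspace_def w'_def in_basis split: bidx.splits if_splits)
    have "w = (\<lambda>x. we x + wo x)" by (auto simp: we_def wo_def split: bidx.splits)
    then have "\<phi> w = (\<lambda>x. \<phi> we x + \<phi> wo x)" using add[OF weS woS] by simp
    moreover have "\<phi> wo (X 1) = 0" using odp woO odd_X by blast
    moreover have "we = lprod n \<beta> w' (ev (Y 1))"
    proof
      fix x show "we x = lprod n \<beta> w' (ev (Y 1)) x"
        using sspace_X[OF w(1)]
        by (cases x) (auto simp: lprod_expand[OF n1] ev_def Pl we_def w'_def)
    qed
    then have "\<phi> we = lprod n \<beta>' (\<phi> w') B" using pr[OF w'S evY[of 1]] unfolding B_def by simp
    moreover have "lprod n \<beta>' (\<phi> w') B (X 1) = 0"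
      using odd_X[OF Bodd] b0 lb_ge3[OF n1] P3X[of 1 n \<beta>' "\<phi> w'"]
      by (simp add: lprod_expand[OF n1] Pl P3X b1_def)
    ultimately have "ev (X 1) (X 1) = (0::complex)" using w(2) by simp
    then show False by (simp add: ev_def)
  qed

  have AX: "A (X i) = b1 * B (Y i)" if "1 \<le> i" "i \<le> n div 2" for i
  proof -
    have "ev (X 1) = lprod n \<beta> (ev (Y 1)) (ev (Y 1))"
      using n1 by (subst lprod_ev) (auto simp: in_basis bprod_def)
    then have "A = lprod n \<beta>' B B" using pr[OF evY evY, of 1 1] unfolding A_def B_def by simp
    moreover have "i + 1 < lb n" using that by (simp add: lb_def)
    moreover have "i \<le> n" using that by (meson div_le_dividend le_trans)
    ultimately show ?thesis using that odd_X[OF Bodd] P3X[of i n \<beta>' B]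
      by (simp add: lprod_expand[OF n1] Pl P3X b1_def)
  qed
  have "1 \<le> n div 2" using n2 by auto
  then have a_eq: "a = b1^2" using AX[of 1] by (simp add: a_def power2_eq_square b1_def)
  have anz: "a \<noteq> 0" using a_eq b1nz by simp

  have Ytop: "\<phi> (ev (Y (n+1))) = (\<lambda>x. if x = Y (n+1) then a^n * b1 else 0)"
  proof
    fix x
    have S: "\<phi> (ev (Y (n+1))) \<in> sspace n" using phiS evY[of "n+1"] by simp
    have O: "\<phi> (ev (Y (n+1))) \<in> odd_part n" using odp evY_odd[of "n+1" n] by auto
    show "\<phi> (ev (Y (n+1))) x = (if x = Y (n+1) then a^n * b1 else 0)"
    proof (cases x)
      case (X i) then show ?thesis using odd_X[OF O] by simp
    next
      case (Y m)
      show ?thesis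
      proof (cases "1 \<le> m \<and> m \<le> n+1")
        case True
        then show ?thesis using Q[of "n+1"] Y by (auto simp: b1_def)
      next
        case False
        then show ?thesis using Y Qtop sspace_Y[OF S, of m]
          by (cases "m = n+2") auto
      qed
    qed
  qed
  have cnz: "c \<noteq> 0"
  proof
    assume c0: "c = 0"
    define t where "t = C (Y (n+1)) / (a^n * b1)"
    have CS: "C \<in> sspace n" using Codd odd_sub by auto
    have CYm: "C (Y m) = 0" if "m \<noteq> n+1" for m
    proof (cases "1 \<le> m \<and> m \<le> n")
      case True then show ?thesis using C0 by blast
    next
      case False
      show ?thesis
      proof (cases "m = n+2")
        case True then show ?thesis using c0 by (simp add: c_def)
      next
        case False2: False
        then have "\<not> (1 \<le> m \<and> m \<le> n+2)" using False that by auto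
        then show ?thesis using sspace_Y[OF CS] by blast
      qed
    qed
    have Ceq: "C = (\<lambda>x. C (Y (n+1)) * ev (Y (n+1)) x)"
    proof
      fix x show "C x = C (Y (n+1)) * ev (Y (n+1)) x"
      proof (cases x)
        case (X i) then show ?thesis using odd_X[OF Codd] by (simp add: ev_def)
      next
        case (Y m)
        then show ?thesis using CYm[of m] by (cases "m = n+1") (auto simp: ev_def)
      qed
    qed
    have "\<phi> (\<lambda>x. t * ev (Y (n+1)) x) = (\<lambda>x. t * \<phi> (ev (Y (n+1))) x)"
      using smul[OF evY[of "n+1"]] by simp
    also have "\<dots> = C"
    proof
      fix x
      have "C x = C (Y (n+1)) * ev (Y (n+1)) x" using Ceq by metis
      then show "t * \<phi> (ev (Y (n+1))) x = C x"
        unfolding Ytop using anz b1nz by (cases "x = Y (n+1)") (auto simp: t_def ev_def)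
    qed
    finally have "\<phi> (\<lambda>x. t * ev (Y (n+1)) x) = C" .
    moreover have "(\<lambda>x. t * ev (Y (n+1)) x) \<in> sspace n"
      using evY[of "n+1"] by (auto simp: sspace_def)
    ultimately have "(\<lambda>x. t * ev (Y (n+1)) x) = ev (Y (n+2))"
      using inj evY[of "n+2"] unfolding C_def by (auto dest: inj_onD)
    then have "t * ev (Y (n+1)) (Y (n+2)) = ev (Y (n+2)) (Y (n+2))" by metis
    then show False by (simp add: ev_def)
  qed
  have nd: "1 \<le> n div 2" using n2 by auto
  have lbd: "lb n + n div 2 = n + 2" by (rule lb_div)
  have lb3: "lb n \<ge> 3" by (rule lb_ge3[OF n1])
  define V where "V = (\<lambda>x. \<Sum>k\<in>{lb n..n+1}. \<beta> k * ev (Y k) x)"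
  have "lprod n \<beta> (ev (X 1)) (ev (Y (n+2))) = bprod n \<beta> (X 1) (Y (n+2))"
    by (rule lprod_ev) (use n1 in \<open>simp_all add: in_basis\<close>)
  also have "\<dots> = V"
    using nd lb3 unfolding V_def by (auto simp: bprod_def intro!: ext sum.cong)
  finally have Vl: "lprod n \<beta> (ev (X 1)) (ev (Y (n+2))) = V" .
  have phiV1: "\<phi> V = lprod n \<beta>' A C"
    using pr[OF evX1 evY[of "n+2"]] Vl unfolding A_def C_def by simp
  have phiV2: "\<phi> V = (\<lambda>x. \<Sum>k\<in>{lb n..n+1}. \<beta> k * \<phi> (ev (Y k)) x)"
    unfolding V_def using lb3 by (intro lin_sum[OF lin]) (auto intro!: evY)
  define D where "D k = c * b1 * \<beta>' k - a^(k-1) * \<beta> k" for k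
  have E: "(\<Sum>i\<in>{1..m+1-lb n}. B (Y i) * D (m+1-i)) = 0" if m: "lb n \<le> m" "m \<le> n+1" for m
  proof -
    have "(\<Sum>k\<in>{lb n..n+1}. \<beta> k * \<phi> (ev (Y k)) (Y m))
        = (\<Sum>k\<in>{lb n..n+1}. \<beta> k * (if k \<le> m then a^(k-1) * B (Y (m+1-k)) else 0))"
      using Q m lb3 by (intro sum.cong refl) auto
    also have "\<dots> = (\<Sum>k\<in>{lb n..m}. \<beta> k * (a^(k-1) * B (Y (m+1-k))))"
      using m by (intro sum.mono_neutral_cong_right) auto
    also have "\<dots> = (\<Sum>i\<in>{1..m+1-lb n}. \<beta> (m+1-i) * (a^(m-i) * B (Y i)))"
      using m lb3
      by (intro sum.reindex_bij_witness[of _ "\<lambda>i. m+1-i" "\<lambda>k. m+1-k"]) (auto simp: Suc_diff_le)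
    finally have L: "\<phi> V (Y m) = \<dots>" using phiV2 by simp
    have "lprod n \<beta>' A C (Y m) = c * P n \<beta>' (Y (n+2)) A (Y m)"
      using odd_X[OF Codd] C0[of 1] n1
      by (simp add: lprod_expand[OF n1] c_def C_def)
    also have "P n \<beta>' (Y (n+2)) A (Y m) =
       (\<Sum>i\<in>{1..n div 2}. A (X i) * (if lb n + i \<le> m + 1 \<and> m \<le> n + 1 then \<beta>' (m + 1 - i) else 0))"
      by (rule P3Y)
    also have "\<dots> = (\<Sum>i\<in>{1..m+1-lb n}. b1 * B (Y i) * \<beta>' (m + 1 - i))"
      using m lbd AX by (intro sum.mono_neutral_cong_right) auto
    finally have R: "\<phi> V (Y m) = c * \<dots>" using phiV1 by simp
    have "(\<Sum>i\<in>{1..m+1-lb n}. B (Y i) * D (m+1-i)) =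
        c * (\<Sum>i\<in>{1..m+1-lb n}. b1 * B (Y i) * \<beta>' (m + 1 - i))
      - (\<Sum>i\<in>{1..m+1-lb n}. \<beta> (m+1-i) * (a^(m-i) * B (Y i)))"
      unfolding D_def sum_distrib_left sum_subtractf[symmetric]
      by (intro sum.cong refl) (auto simp: algebra_simps Suc_diff_le)
    also have "\<dots> = 0" using L R by simp
    finally show ?thesis .
  qed
  have Dz: "lb n \<le> m \<longrightarrow> m \<le> n+1 \<longrightarrow> D m = 0" for m
  proof (induction m rule: less_induct)
    case (less m)
    show ?case
    proof (intro impI)
      assume m: "lb n \<le> m" "m \<le> n+1"
      have "0 = (\<Sum>i\<in>{1..m+1-lb n}. B (Y i) * D (m+1-i))" using E[OF m] by simp
      also have "\<dots> = B (Y 1) * D m + (\<Sum>i\<in>{Suc 1..m+1-lb n}. B (Y i) * D (m+1-i))"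
        using m by (subst sum.atLeast_Suc_atMost) auto
      also have "(\<Sum>i\<in>{Suc 1..m+1-lb n}. B (Y i) * D (m+1-i)) = 0"
        using m less.IH by (intro sum.neutral ballI) auto
      finally have "b1 * D m = 0" by (simp add: b1_def)
      then show "D m = 0" using b1nz by simp
    qed
  qed
  show ?thesis
  proof (intro exI conjI ballI)
    show "1 / b1 \<noteq> 0" using b1nz by simp
    show "1 / c \<noteq> 0" using cnz by simp
    fix j assume j: "j \<in> {(n + 5) div 2..n+1}"
    then have jl: "lb n \<le> j" "j \<le> n+1" by (auto simp: lb_def)
    then have j3: "j \<ge> 3" using lb3 by simp
    have "c * b1 * \<beta>' j = a^(j-1) * \<beta> j" using Dz[of j] jl by (simp add: D_def)
    also have "a^(j-1) = b1^(2*j-3) * b1"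
    proof -
      have e2: "2*(j-1) = Suc (2*j-3)" using j3 by arith
      show ?thesis unfolding a_eq power_mult[symmetric] e2 by (simp add: mult.commute)
    qed
    finally have "c * \<beta>' j = b1^(2*j-3) * \<beta> j" using b1nz
      by (metis (no_types, lifting) mult.assoc mult.commute mult_left_cancel)
    then show "1 / c * \<beta> j = (1 / b1) ^ (2 * j - 3) * \<beta>' j"
      using cnz b1nz by (simp add: power_one_over field_simps)
  qed
qed

theorem theorem3p4:
  fixes n :: nat and \<beta> \<beta>' :: "nat \<Rightarrow> complex"
  assumes "n \<ge> 1"
  shows "isomorphic_L n \<beta> \<beta>' \<longleftrightarrow>
    (\<exists>a1 b::complex. a1 \<noteq> 0 \<and> b \<noteq> 0 \<and>
       (\<forall>j\<in>{(n + 5) div 2..n+1}. b * \<beta> j = a1 ^ (2 * j - 3) * \<beta>' j))"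
proof
  assume "isomorphic_L n \<beta> \<beta>'"
  then obtain \<phi> where iso: "super_iso n \<beta> \<beta>' \<phi>" by (auto simp: isomorphic_L_def)
  show "\<exists>a1 b::complex. a1 \<noteq> 0 \<and> b \<noteq> 0 \<and>
       (\<forall>j\<in>{(n + 5) div 2..n+1}. b * \<beta> j = a1 ^ (2 * j - 3) * \<beta>' j)"
  proof (cases "n \<ge> 2")
    case True
    then show ?thesis using forward[OF True iso] by blast
  next
    case False
    then have "n = 1" using assms by simp
    then show ?thesis by (intro exI[of _ 1]) auto
  qed
next
  assume "\<exists>a1 b::complex. a1 \<noteq> 0 \<and> b \<noteq> 0 \<and>
       (\<forall>j\<in>{(n + 5) div 2..n+1}. b * \<beta> j = a1 ^ (2 * j - 3) * \<beta>' j)"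
  then obtain a1 b :: complex where a1: "a1 \<noteq> 0" and b: "b \<noteq> 0"
    and H: "\<forall>j\<in>{(n + 5) div 2..n+1}. b * \<beta> j = a1 ^ (2 * j - 3) * \<beta>' j" by blast
  have H': "\<forall>k\<in>{lb n..n+1}. \<beta> k * (1/a1)^(2*k-3) = (1/b) * \<beta>' k"
  proof
    fix k assume "k \<in> {lb n..n+1}"
    then have "b * \<beta> k = a1 ^ (2 * k - 3) * \<beta>' k" using H by (auto simp: lb_def)
    then show "\<beta> k * (1/a1)^(2*k-3) = (1/b) * \<beta>' k"
      using a1 b by (simp add: power_one_over field_simps)
  qed
  show "isomorphic_L n \<beta> \<beta>'"
    by (rule construct_iso[OF _ _ H']) (use a1 b in auto)
qed

end
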